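(* Let $k\ge 2$ and let $G$ be a finite simple $r$-regular graph admitting a closed neighborhood balanced $k$-coloring $c$ with color classes $V_1,\dots,V_k$. Then for every $i$, $|V_i|=\frac{|V(G)|}{k}$ and $|E(V_i,V_i)|=\frac{(r+1-k)|V(G)|}{2k^2}$, and for all distinct $i,j$, $|E(V_i,V_j)|=\frac{(r+1)|V(G)|}{k^2}$.
   Context: For a vertex $v$, $N[v]=\{v\}\cup\{u : uv\in E(G)\}$. A closed neighborhood balanced $k$-coloring of $G$ is a map $c: V(G)\to\{1,\dots,k\}$ such that for every vertex $v$ the numbers $|\{u\in N[v] : c(u)=i\}|$, $i=1,\dots,k$, are all equal; its color classes are $V_i=c^{-1}(i)$. For $X,Y\subseteq V(G)$, $E(X,Y)$ is the set of edges joining a vertex of $X$ to a vertex of $Y$; $E(X,X)$ is the set of edges with both endpoints in $X$. *)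

theory Defs
  imports Complex_Main
begin

definition simple_graph :: "'a set \<Rightarrow> 'a set set \<Rightarrow> bool" where
  "simple_graph V E \<longleftrightarrow> finite V \<and>
     (\<forall>e\<in>E. \<exists>u v. u \<in> V \<and> v \<in> V \<and> u \<noteq> v \<and> e = {u, v})"

definition closed_nbhd :: "'a set \<Rightarrow> 'a set set \<Rightarrow> 'a \<Rightarrow> 'a set" where
  "closed_nbhd V E v = {v} \<union> {u \<in> V. {u, v} \<in> E}"

definition regular :: "'a set \<Rightarrow> 'a set set \<Rightarrow> nat \<Rightarrow> bool" where
  "regular V E r \<longleftrightarrow> (\<forall>v\<in>V. card {u \<in> V. {u, v} \<in> E} = r)"

definition color_class :: "'a set \<Rightarrow> ('a \<Rightarrow> nat) \<Rightarrow> nat \<Rightarrow> 'a set" where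
  "color_class V c i = {v \<in> V. c v = i}"

definition cnb_coloring :: "'a set \<Rightarrow> 'a set set \<Rightarrow> nat \<Rightarrow> ('a \<Rightarrow> nat) \<Rightarrow> bool" where
  "cnb_coloring V E k c \<longleftrightarrow> (\<forall>v\<in>V. c v \<in> {1..k}) \<and>
     (\<forall>v\<in>V. \<forall>i\<in>{1..k}. \<forall>j\<in>{1..k}.
        card {u \<in> closed_nbhd V E v. c u = i} = card {u \<in> closed_nbhd V E v. c u = j})"

definition edges_between :: "'a set set \<Rightarrow> 'a set \<Rightarrow> 'a set \<Rightarrow> 'a set set" where
  "edges_between E X Y = {e \<in> E. \<exists>x\<in>X. \<exists>y\<in>Y. e = {x, y}}"

end

theory Submission
  imports Defs
begin

lemma card_sum_group:
  assumes "finite S" "finite T" "g ` S \<subseteq> T"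
  shows "card S = (\<Sum>y\<in>T. card {x\<in>S. g x = y})"
proof -
  have "(\<Sum>y\<in>T. \<Sum>x\<in>{x. x \<in> S \<and> g x = y}. (1::nat)) = (\<Sum>x\<in>S. 1)"
    by (rule sum.group[OF assms])
  then show ?thesis by simp
qed

lemma card_filter_swap:
  assumes "finite A" "finite B"
  shows "(\<Sum>a\<in>A. card {b\<in>B. P a b}) = (\<Sum>b\<in>B. card {a\<in>A. P a b})"
proof -
  have 1: "\<And>a. card {b\<in>B. P a b} = (\<Sum>b\<in>B. if P a b then 1 else (0::nat))"
  proof -
    fix a
    have "{b\<in>B. P a b} = B \<inter> Collect (P a)" by blast
    then show "card {b\<in>B. P a b} = (\<Sum>b\<in>B. if P a b then 1 else (0::nat))"
      using assms by (simp add: sum.If_cases)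
  qed
  have 2: "\<And>b. card {a\<in>A. P a b} = (\<Sum>a\<in>A. if P a b then 1 else (0::nat))"
  proof -
    fix b
    have "{a\<in>A. P a b} = A \<inter> Collect (\<lambda>a. P a b)" by blast
    then show "card {a\<in>A. P a b} = (\<Sum>a\<in>A. if P a b then 1 else (0::nat))"
      using assms by (simp add: sum.If_cases)
  qed
  show ?thesis unfolding 1 2 by (rule sum.swap)
qed

lemma disj_edges:
  assumes "finite X" "finite Y" "X \<inter> Y = {}"
  shows "card (edges_between E X Y) = (\<Sum>x\<in>X. card {y\<in>Y. {x,y} \<in> E})"
proof -
  let ?S = "Sigma X (\<lambda>x. {y\<in>Y. {x,y} \<in> E})"
  let ?f = "\<lambda>(x,y). {x,y}"
  have img: "edges_between E X Y = ?f ` ?S"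
    unfolding edges_between_def by auto
  have inj: "inj_on ?f ?S"
  proof (rule inj_onI)
    fix p q assume "p \<in> ?S" "q \<in> ?S" "?f p = ?f q"
    then show "p = q" using assms(3)
      by (cases p; cases q) (auto simp: doubleton_eq_iff)
  qed
  have "card (edges_between E X Y) = card ?S"
    unfolding img by (rule card_image[OF inj])
  also have "\<dots> = (\<Sum>x\<in>X. card {y\<in>Y. {x,y} \<in> E})"
    using assms by simp
  finally show ?thesis .
qed

lemma same_edges:
  assumes "finite X" "\<forall>e\<in>E. \<exists>u v. u \<noteq> v \<and> e = {u, v}"
  shows "2 * card (edges_between E X X) = (\<Sum>x\<in>X. card {y\<in>X. {x,y} \<in> E})"
proof -
  let ?S = "Sigma X (\<lambda>x. {y\<in>X. {x,y} \<in> E})"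
  let ?f = "\<lambda>(x,y). {x,y}"
  have img: "?f ` ?S \<subseteq> edges_between E X X"
    unfolding edges_between_def by auto
  have fin: "finite ?S" using assms by simp
  have fin2: "finite (edges_between E X X)"
  proof -
    have "edges_between E X X \<subseteq> ?f ` ?S"
      unfolding edges_between_def by auto
    then show ?thesis using fin finite_subset by blast
  qed
  have "card ?S = (\<Sum>e\<in>edges_between E X X. card {p\<in>?S. ?f p = e})"
    by (rule card_sum_group[OF fin fin2 img])
  also have "\<dots> = (\<Sum>e\<in>edges_between E X X. 2)"
  proof (rule sum.cong[OF refl])
    fix e assume "e \<in> edges_between E X X"
    then obtain x y where xy: "x \<in> X" "y \<in> X" "e = {x,y}" "e \<in> E"
      unfolding edges_between_def by auto
    have "x \<noteq> y"
    proof
      assume "x = y"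
      then have "{x} \<in> E" using xy by simp
      then obtain u v where "u \<noteq> v" "{x} = {u,v}" using assms(2) by blast
      then show False by (metis insertCI singletonD)
    qed
    have "{y,x} \<in> E" using xy by (simp add: insert_commute)
    have "{p\<in>?S. ?f p = e} = {(x,y),(y,x)}"
    proof (rule set_eqI)
      fix p :: "'a \<times> 'a"
      obtain a b where p: "p = (a,b)" by fastforce
      have "p \<in> {p\<in>?S. ?f p = e} \<longleftrightarrow> a \<in> X \<and> b \<in> X \<and> {a,b} \<in> E \<and> {a,b} = {x,y}"
        using p xy(3) by simp
      also have "\<dots> \<longleftrightarrow> (a = x \<and> b = y) \<or> (a = y \<and> b = x)"
        using xy \<open>{y,x} \<in> E\<close> by (metis doubleton_eq_iff)
      finally show "p \<in> {p\<in>?S. ?f p = e} \<longleftrightarrow> p \<in> {(x,y),(y,x)}" using p by simp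
    qed
    then show "card {p\<in>?S. ?f p = e} = 2" using \<open>x \<noteq> y\<close> by simp
  qed
  also have "\<dots> = 2 * card (edges_between E X X)" by simp
  finally show ?thesis using assms by simp
qed

theorem theorem2p10:
  fixes V :: "'a set" and E :: "'a set set" and r k :: nat and c :: "'a \<Rightarrow> nat"
  assumes "simple_graph V E"
    and "regular V E r"
    and "k \<ge> 2"
    and "cnb_coloring V E k c"
  shows "(\<forall>i\<in>{1..k}. real (card (color_class V c i)) = real (card V) / real k
            \<and> real (card (edges_between E (color_class V c i) (color_class V c i)))
                = (real r + 1 - real k) * real (card V) / (2 * (real k)^2))
       \<and> (\<forall>i\<in>{1..k}. \<forall>j\<in>{1..k}. i \<noteq> j \<longrightarrow>
            real (card (edges_between E (color_class V c i) (color_class V c j)))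
              = (real r + 1) * real (card V) / (real k)^2)"
proof (cases "V = {}")
  case True
  have cc: "color_class V c i = {}" for i using True unfolding color_class_def by simp
  have eb: "edges_between E {} X = {}" for X unfolding edges_between_def by simp
  show ?thesis using True by (simp add: color_class_def edges_between_def)
next
  case False
  note sg = assms(1)[unfolded simple_graph_def]
  have fin: "finite V" using sg by blast
  have edg: "\<forall>e\<in>E. \<exists>u v. u \<noteq> v \<and> e = {u, v}" using sg by blast
  define N where "N v = closed_nbhd V E v" for v
  define C where "C i = color_class V c i" for i
  have finC: "finite (C i)" for i using fin unfolding C_def color_class_def by simp
  have noloop: "{v} \<notin> E" for v
  proof
    assume "{v} \<in> E"
    then obtain a b where "a \<noteq> b" "{v} = {a,b}" using edg by blast
    then show False by (metis insertCI singletonD)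
  qed
  have Nsub: "N v \<subseteq> V" if "v \<in> V" for v
    using that unfolding N_def closed_nbhd_def by auto
  have Ncard: "card (N v) = r + 1" if "v \<in> V" for v
  proof -
    have "N v = insert v {u \<in> V. {u, v} \<in> E}" unfolding N_def closed_nbhd_def by auto
    moreover have "v \<notin> {u \<in> V. {u, v} \<in> E}" using noloop by simp
    moreover have "card {u \<in> V. {u, v} \<in> E} = r"
      using assms(2) that unfolding regular_def by blast
    ultimately show ?thesis using fin by simp
  qed
  have cnb1: "\<forall>v\<in>V. c v \<in> {1..k}" using assms(4) unfolding cnb_coloring_def by blast
  have cnb2: "card {u \<in> N v. c u = i} = card {u \<in> N v. c u = j}"
    if "v \<in> V" "i \<in> {1..k}" "j \<in> {1..k}" for v i j
  proof -
    have "\<forall>v\<in>V. \<forall>i\<in>{1..k}. \<forall>j\<in>{1..k}.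
        card {u \<in> closed_nbhd V E v. c u = i} = card {u \<in> closed_nbhd V E v. c u = j}"
      using assms(4) unfolding cnb_coloring_def by (rule conjunct2)
    then show ?thesis using that unfolding N_def by blast
  qed
  have cnt: "k * card {u \<in> N v. c u = i} = r + 1" if "v \<in> V" "i \<in> {1..k}" for v i
  proof -
    have finN: "finite (N v)" using Nsub[OF that(1)] fin finite_subset by blast
    have "c ` N v \<subseteq> {1..k}" using Nsub[OF that(1)] cnb1 by blast
    from card_sum_group[OF finN _ this]
    have "card (N v) = (\<Sum>j\<in>{1..k}. card {u \<in> N v. c u = j})" by simp
    also have "\<dots> = (\<Sum>j\<in>{1..k}. card {u \<in> N v. c u = i})"
    proof (rule sum.cong[OF refl])
      fix j assume "j \<in> {1..k}"
      then show "card {u \<in> N v. c u = j} = card {u \<in> N v. c u = i}"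
        using cnb2[OF that(1) _ that(2)] by blast
    qed
    also have "\<dots> = k * card {u \<in> N v. c u = i}" by simp
    finally show ?thesis using Ncard[OF that(1)] by simp
  qed
  obtain v0 where v0: "v0 \<in> V" using False by blast
  define m where "m = card {u \<in> N v0. c u = 1}"
  have km: "k * m = r + 1" unfolding m_def using cnt[OF v0] assms(3) by simp
  have mpos: "m \<ge> 1" using km by (cases m) auto
  have cntm: "card {u \<in> N v. c u = i} = m" if "v \<in> V" "i \<in> {1..k}" for v i
  proof -
    have "k * card {u \<in> N v. c u = i} = k * m" using cnt[OF that] km by simp
    then show ?thesis using assms(3) by simp
  qed
  have symN: "u \<in> N v \<longleftrightarrow> v \<in> N u" if "u \<in> V" "v \<in> V" for u v
    using that unfolding N_def closed_nbhd_def by (auto simp: insert_commute)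
  have classcard: "k * card (C i) = card V" if i: "i \<in> {1..k}" for i
  proof -
    have "card V * m = (\<Sum>v\<in>V. card {u \<in> N v. c u = i})"
      using cntm i by simp
    also have "\<dots> = (\<Sum>v\<in>V. card {u \<in> V. c u = i \<and> u \<in> N v})"
    proof (rule sum.cong[OF refl])
      fix v assume "v \<in> V"
      then have "{u \<in> N v. c u = i} = {u \<in> V. c u = i \<and> u \<in> N v}" using Nsub by blast
      then show "card {u \<in> N v. c u = i} = card {u \<in> V. c u = i \<and> u \<in> N v}" by simp
    qed
    also have "\<dots> = (\<Sum>u\<in>V. card {v \<in> V. c u = i \<and> u \<in> N v})"
      by (rule card_filter_swap[OF fin fin])
    also have "\<dots> = (\<Sum>u\<in>V. if c u = i then r + 1 else 0)"
    proof (rule sum.cong[OF refl])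
      fix u assume u: "u \<in> V"
      show "card {v \<in> V. c u = i \<and> u \<in> N v} = (if c u = i then r + 1 else 0)"
      proof (cases "c u = i")
        case True
        have "{v \<in> V. c u = i \<and> u \<in> N v} = N u"
          using True symN[OF u] Nsub[OF u] by auto
        then show ?thesis using True Ncard[OF u] by simp
      next
        case False then show ?thesis by simp
      qed
    qed
    also have "\<dots> = card (C i) * (r + 1)"
    proof -
      have "C i = V \<inter> {u. c u = i}" unfolding C_def color_class_def by blast
      then show ?thesis using fin by (simp add: sum.If_cases)
    qed
    finally have "card V * m = card (C i) * k * m" using km by (simp add: mult.assoc)
    then show ?thesis using mpos by simp
  qed
  have inner: "card {y \<in> C i. {x, y} \<in> E} = m - 1" if "i \<in> {1..k}" "x \<in> C i" for i x
  proof -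
    have xV: "x \<in> V" "c x = i" using that(2) unfolding C_def color_class_def by auto
    have "{u \<in> N x. c u = i} = insert x {y \<in> C i. {x, y} \<in> E}"
      using xV unfolding N_def closed_nbhd_def C_def color_class_def by (auto simp: insert_commute)
    moreover have "x \<notin> {y \<in> C i. {x, y} \<in> E}" using noloop by simp
    ultimately have "m = Suc (card {y \<in> C i. {x, y} \<in> E})"
      using cntm[OF xV(1) that(1)] finC by simp
    then show ?thesis by simp
  qed
  have outer: "card {y \<in> C j. {x, y} \<in> E} = m"
    if "i \<in> {1..k}" "j \<in> {1..k}" "i \<noteq> j" "x \<in> C i" for i j x
  proof -
    have xV: "x \<in> V" "c x = i" using that(4) unfolding C_def color_class_def by auto
    have "{u \<in> N x. c u = j} = {y \<in> C j. {x, y} \<in> E}"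
      using xV that(3) unfolding N_def closed_nbhd_def C_def color_class_def
      by (auto simp: insert_commute)
    then show ?thesis using cntm[OF xV(1) that(2)] by simp
  qed
  have kpos: "real k > 0" using assms(3) by simp
  have mreal: "real m = (real r + 1) / real k"
  proof -
    have "real k * real m = real r + 1" using arg_cong[OF km, of real] by simp
    then show ?thesis using kpos by (simp add: field_simps)
  qed
  have A: "real (card (C i)) = real (card V) / real k
           \<and> real (card (edges_between E (C i) (C i))) = (real r + 1 - real k) * real (card V) / (2 * (real k)^2)"
    if i: "i \<in> {1..k}" for i
  proof
    have cc: "real (card (C i)) = real (card V) / real k"
    proof -
      have "real k * real (card (C i)) = real (card V)" using arg_cong[OF classcard[OF i], of real] by simp
      then show ?thesis using kpos by (simp add: field_simps)
    qed
    then show "real (card (C i)) = real (card V) / real k" .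
    have "2 * card (edges_between E (C i) (C i)) = (\<Sum>x\<in>C i. card {y \<in> C i. {x, y} \<in> E})"
      by (rule same_edges[OF finC edg])
    also have "\<dots> = card (C i) * (m - 1)" using inner[OF i] by simp
    finally have "real (2 * card (edges_between E (C i) (C i))) = real (card (C i) * (m - 1))"
      by simp
    then have "2 * real (card (edges_between E (C i) (C i))) = real (card (C i)) * (real m - 1)"
      using mpos by (simp add: of_nat_diff)
    then show "real (card (edges_between E (C i) (C i))) = (real r + 1 - real k) * real (card V) / (2 * (real k)^2)"
      unfolding cc mreal using kpos by (simp add: field_simps power2_eq_square)
  qed
  have B: "real (card (edges_between E (C i) (C j))) = (real r + 1) * real (card V) / (real k)^2"
    if i: "i \<in> {1..k}" and j: "j \<in> {1..k}" and ij: "i \<noteq> j" for i j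
  proof -
    have cc: "real (card (C i)) = real (card V) / real k"
      using A[OF i] by blast
    have disj: "C i \<inter> C j = {}" using ij unfolding C_def color_class_def by auto
    have "card (edges_between E (C i) (C j)) = (\<Sum>x\<in>C i. card {y \<in> C j. {x, y} \<in> E})"
      by (rule disj_edges[OF finC finC disj])
    also have "\<dots> = card (C i) * m" using outer[OF i j ij] by simp
    finally have "real (card (edges_between E (C i) (C j))) = real (card (C i)) * real m" by simp
    then show ?thesis unfolding cc mreal using kpos by (simp add: field_simps power2_eq_square)
  qed
  show ?thesis using A B unfolding C_def by blast
qed

end
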